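(* Fix $m\in\mathbb N$ and $r\ge2$, and let $(A_{m,r},B_{m,r})$, together with the level-$(r-1)$ pairs $(A^{(j)},B^{(j)})$ and index $i$ used in its construction, be drawn from $I_{m,r}$ as described in the context, where the parameter $\epsilon$ at each level of the construction is chosen sufficiently small as a function of $m$ and the level. Then, almost surely, the following are equivalent: (1) $\mathrm{conv}(A_{m,r})\cap\mathrm{conv}(B_{m,r})=\emptyset$; (2) $A^{(i)}\cap B^{(i)}=\emptyset$; (3) $A_{m,r}\cap B_{m,r}=\emptyset$.
   Context: The random pair $I_{m,r}=(A_{m,r},B_{m,r})$ of finite subsets of $\mathbb R^2$ is defined recursively. For $r=1$: $A_{m,1}=\{(0,0)\}$ and $B_{m,1}$ is uniformly either $\{(0,0)\}$ or $\emptyset$. For $r>1$: let $p_1,\dots,p_m$ be $m$ evenly spaced points on the part of the unit circle in the open positive quadrant $\{(x,y):x>0,y>0\}$; let $\epsilon>0$ be a parameter; let $U_j$ be the rotation matrix mapping the $y$-axis direction $e_2$ to $p_j$ and $e_1$ to a unit vector $p_j^\perp$ orthogonal to $p_j$; let $T_j(v)=U_j\begin{pmatrix}-\epsilon&0\\0&-\epsilon^2\end{pmatrix}v+p_j$. Draw $(A^{(1)},B^{(1)}),\dots,(A^{(m)},B^{(m)})$ i.i.d. from $I_{m,r-1}$ and $i$ uniform in $[m]$ independently, and set $A_{m,r}=\bigcup_{j=1}^mT_j(B^{(j)})$ and $B_{m,r}=T_i(A^{(i)})$. $\mathrm{conv}$ denotes convex hull. *)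

theory Defs
  imports "HOL-Analysis.Analysis" "HOL-Probability.Probability"
begin

type_synonym pt = "real \<times> real"
type_synonym pr = "pt set \<times> pt set"

definition ang :: "nat \<Rightarrow> nat \<Rightarrow> real" where
  "ang m j = real j * pi / (2 * (real m + 1))"

definition pj :: "nat \<Rightarrow> nat \<Rightarrow> pt" where
  "pj m j = (cos (ang m j), sin (ang m j))"

text \<open>Rotation U_j: e2 maps to p_j, e1 maps to p_j^perp = (sin theta, - cos theta)
  (rotation by theta - pi/2).\<close>
definition Urot :: "nat \<Rightarrow> nat \<Rightarrow> pt \<Rightarrow> pt" where
  "Urot m j v = (fst v * sin (ang m j) + snd v * cos (ang m j),
                 - fst v * cos (ang m j) + snd v * sin (ang m j))"

definition Tmap :: "nat \<Rightarrow> real \<Rightarrow> nat \<Rightarrow> pt \<Rightarrow> pt" where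
  "Tmap m e j v = Urot m j (- e * fst v, - (e ^ 2) * snd v) + pj m j"

text \<open>Given the level-(r-1) pairs f j (j = 1..m) and the index i, the level-r pair.\<close>
definition build :: "nat \<Rightarrow> real \<Rightarrow> (nat \<Rightarrow> pr) \<times> nat \<Rightarrow> pr" where
  "build m e w = (\<Union>j\<in>{1..m}. Tmap m e j ` snd (fst w j),
                  Tmap m e (snd w) ` fst (fst w (snd w)))"

definition base_pmf :: "pr pmf" where
  "base_pmf = map_pmf (\<lambda>b. ({(0,0)}, if b then {(0,0)} else {})) (bernoulli_pmf (1/2))"

text \<open>I m eps r : the random pair I_{m,r}, where eps k is the parameter used at level k.
  (Level 0 is a dummy, set equal to level 1.)\<close>
fun Ipmf :: "nat \<Rightarrow> (nat \<Rightarrow> real) \<Rightarrow> nat \<Rightarrow> pr pmf" where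
  "Ipmf m eps 0 = base_pmf"
| "Ipmf m eps (Suc 0) = base_pmf"
| "Ipmf m eps (Suc (Suc k)) =
     map_pmf (build m (eps (Suc (Suc k))))
       (pair_pmf (Pi_pmf {1..m} undefined (\<lambda>_. Ipmf m eps (Suc k))) (pmf_of_set {1..m}))"

definition joint :: "nat \<Rightarrow> (nat \<Rightarrow> real) \<Rightarrow> nat \<Rightarrow> ((nat \<Rightarrow> pr) \<times> nat) pmf" where
  "joint m eps r = pair_pmf (Pi_pmf {1..m} undefined (\<lambda>_. Ipmf m eps (r - 1))) (pmf_of_set {1..m})"

lemma Ipmf_joint: "r \<ge> 2 \<Longrightarrow> Ipmf m eps r = map_pmf (build m (eps r)) (joint m eps r)"
  proof -
  assume "r \<ge> 2"
  then obtain k where "r = Suc (Suc k)" by (metis add_2_eq_Suc le_Suc_ex)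
  then show ?thesis by (simp add: joint_def)
qed

end

theory Submission
  imports Defs
begin

lemma absmul: fixes x y a b :: real shows "\<bar>x\<bar> \<le> a \<Longrightarrow> \<bar>y\<bar> \<le> b \<Longrightarrow> \<bar>x * y\<bar> \<le> a * b"
proof -
  assume h: "\<bar>x\<bar> \<le> a" "\<bar>y\<bar> \<le> b"
  have a0: "0 \<le> a" using h(1) abs_ge_zero[of x] by linarith
  show "\<bar>x * y\<bar> \<le> a * b" unfolding abs_mult using mult_mono[OF h(1) h(2) a0 abs_ge_zero] .
qed

lemma T_self:
  fixes sv cv e a x y :: real
  assumes "sv^2 + cv^2 = 1"
  shows "(cv + e * a * sv) * (- e * x * sv - e^2 * y * cv + cv) + (sv - e * a * cv) * (e * x * cv - e^2 * y * sv + sv)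
     = 1 - e^2 * (a * x + y)"
proof -
  have "(cv + e * a * sv) * (- e * x * sv - e^2 * y * cv + cv) + (sv - e * a * cv) * (e * x * cv - e^2 * y * sv + sv)
     = (sv^2 + cv^2) - e^2 * (a * x + y) * (sv^2 + cv^2)" by (simp add: algebra_simps power2_eq_square)
  then show ?thesis using assms by simp
qed

lemma T_other:
  fixes si ci sj cj e a x y :: real
  assumes "\<bar>x\<bar> \<le> 2" "\<bar>y\<bar> \<le> 2" "\<bar>si\<bar> \<le> 1" "\<bar>ci\<bar> \<le> 1" "\<bar>sj\<bar> \<le> 1" "\<bar>cj\<bar> \<le> 1"
    "0 < e" "e \<le> 1" "\<bar>e * a\<bar> \<le> 1/2"
  shows "(ci + e * a * si) * (- e * x * sj - e^2 * y * cj + cj) + (si - e * a * ci) * (e * x * cj - e^2 * y * sj + sj)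
     \<le> (ci * cj + si * sj) + 2 * \<bar>e * a\<bar> + 12 * e"
proof -
  define nx where "nx = ci + e * a * si"
  define ny where "ny = si - e * a * ci"
  have "\<bar>e * a * si\<bar> \<le> 1/2 * 1" using absmul assms by blast
  then have nx: "\<bar>nx\<bar> \<le> 3/2" unfolding nx_def using assms by linarith
  have "\<bar>e * a * ci\<bar> \<le> 1/2 * 1" using absmul assms by blast
  then have ny: "\<bar>ny\<bar> \<le> 3/2" unfolding ny_def using assms by linarith
  have eq: "nx * (- e * x * sj - e^2 * y * cj + cj) + ny * (e * x * cj - e^2 * y * sj + sj)
     = (ci * cj + si * sj) + e * a * (si * cj - ci * sj) + e * (x * (ny * cj - nx * sj)) - e^2 * (y * (nx * cj + ny * sj))"
    unfolding nx_def ny_def by (simp add: algebra_simps power2_eq_square)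
  have b1: "\<bar>ny * cj - nx * sj\<bar> \<le> 3"
  proof -
    have "\<bar>ny * cj\<bar> \<le> 3/2 * 1" using ny assms absmul by blast
    moreover have "\<bar>nx * sj\<bar> \<le> 3/2 * 1" using nx assms absmul by blast
    ultimately show ?thesis by linarith
  qed
  have b2: "\<bar>nx * cj + ny * sj\<bar> \<le> 3"
  proof -
    have "\<bar>nx * cj\<bar> \<le> 3/2 * 1" using nx assms absmul by blast
    moreover have "\<bar>ny * sj\<bar> \<le> 3/2 * 1" using ny assms absmul by blast
    ultimately show ?thesis by linarith
  qed
  have b0: "\<bar>si * cj - ci * sj\<bar> \<le> 2"
  proof -
    have "\<bar>si * cj\<bar> \<le> 1 * 1" using assms absmul by blast
    moreover have "\<bar>ci * sj\<bar> \<le> 1 * 1" using assms absmul by blast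
    ultimately show ?thesis by linarith
  qed
  have t0: "\<bar>e * a * (si * cj - ci * sj)\<bar> \<le> \<bar>e * a\<bar> * 2" using b0 absmul by blast
  have t1: "\<bar>x * (ny * cj - nx * sj)\<bar> \<le> 2 * 3" using b1 assms absmul by blast
  have t2: "\<bar>y * (nx * cj + ny * sj)\<bar> \<le> 2 * 3" using b2 assms absmul by blast
  have t1': "\<bar>e * (x * (ny * cj - nx * sj))\<bar> \<le> e * 6"
    using absmul[OF _ t1, of e e] assms by simp
  have e2: "e^2 \<le> e" using assms by (simp add: power2_eq_square mult_left_le)
  have t2': "\<bar>e^2 * (y * (nx * cj + ny * sj))\<bar> \<le> e * 6"
  proof -
    have "\<bar>e^2 * (y * (nx * cj + ny * sj))\<bar> \<le> e^2 * 6" using absmul[OF _ t2, of "e^2" "e^2"] by simp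
    also have "\<dots> \<le> e * 6" using e2 by simp
    finally show ?thesis .
  qed
  show ?thesis unfolding nx_def[symmetric] ny_def[symmetric] eq using t0 t1' t2' by linarith
qed

definition Dm :: "nat \<Rightarrow> real" where "Dm m = pi / (2 * (real m + 1))"
definition Mb :: "nat \<Rightarrow> real" where "Mb m = 4 / sin (Dm m)"
definition dd :: "nat \<Rightarrow> real" where
  "dd m = min (1/8) (min ((sin (Dm m))^2 / 8) ((1 - cos (Dm m)) / (3 * Mb m + 16)))"

definition boxp :: "pr \<Rightarrow> bool" where
  "boxp P \<longleftrightarrow> (\<forall>x\<in>fst P \<union> snd P. \<bar>fst x\<bar> \<le> 2 \<and> \<bar>snd x\<bar> \<le> 2)"
definition sepp :: "real \<Rightarrow> pt set \<Rightarrow> pt set \<Rightarrow> bool" where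
  "sepp M A B \<longleftrightarrow> (\<exists>a c. \<bar>a\<bar> \<le> M \<and> \<bar>c\<bar> \<le> M \<and> (\<forall>x\<in>B. c < a * fst x + snd x) \<and> (\<forall>x\<in>A. a * fst x + snd x < c))"

lemma ang_eq: "ang m j = real j * Dm m"
  by (simp add: ang_def Dm_def)

lemma Dm_pos: "0 < Dm m" by (simp add: Dm_def add_pos_nonneg)

lemma Dm_lt: "real m * Dm m < pi / 2"
proof -
  have "real m * Dm m = pi / 2 * (real m / (real m + 1))" by (simp add: Dm_def field_simps)
  also have "\<dots> < pi / 2" by (simp add: field_simps)
  finally show ?thesis .
qed

lemma Dm_le1: "m \<ge> 1 \<Longrightarrow> Dm m < pi / 2"
proof -
  assume "m \<ge> 1"
  then have "1 * Dm m \<le> real m * Dm m" using Dm_pos[of m] by (intro mult_right_mono) auto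
  then show ?thesis using Dm_lt[of m] by linarith
qed

lemma sin_Dm_pos: "m \<ge> 1 \<Longrightarrow> 0 < sin (Dm m)"
  using Dm_pos[of m] Dm_le1[of m] by (intro sin_gt_zero) (auto simp: pi_gt_zero)

lemma cos_Dm_lt: "m \<ge> 1 \<Longrightarrow> cos (Dm m) < 1"
proof -
  assume "m \<ge> 1"
  then have "cos (Dm m) < cos 0"
    using Dm_pos[of m] Dm_le1[of m] by (intro cos_monotone_0_pi) auto
  then show ?thesis by simp
qed

lemma sin_ang_ge: assumes "j \<in> {1..m}" shows "sin (Dm m) \<le> sin (ang m j)"
proof -
  have j: "1 \<le> real j" "real j \<le> real m" using assms by auto
  have "Dm m \<le> real j * Dm m" using j Dm_pos[of m] by simp
  moreover have "real j * Dm m \<le> real m * Dm m" using j Dm_pos[of m] by (simp add: mult_right_mono)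
  moreover note Dm_lt[of m] Dm_pos[of m] pi_gt_zero
  ultimately have h: "-(pi/2) \<le> Dm m" "Dm m \<le> pi/2" "-(pi/2) \<le> real j * Dm m" "real j * Dm m \<le> pi/2"
    by linarith+
  show ?thesis unfolding ang_eq using sin_mono_le_eq[OF h] \<open>Dm m \<le> real j * Dm m\<close> by simp
qed

lemma cos_ang_le: assumes "i \<in> {1..m}" "j \<in> {1..m}" "i \<noteq> j"
  shows "cos (ang m i) * cos (ang m j) + sin (ang m i) * sin (ang m j) \<le> cos (Dm m)"
proof -
  have "cos (ang m i) * cos (ang m j) + sin (ang m i) * sin (ang m j) = cos (ang m i - ang m j)"
    by (simp add: cos_diff)
  also have "\<dots> = cos \<bar>(real i - real j) * Dm m\<bar>" by (simp add: ang_eq algebra_simps)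
  also have "\<dots> \<le> cos (Dm m)"
  proof -
    have d: "\<bar>(real i - real j) * Dm m\<bar> = \<bar>real i - real j\<bar> * Dm m" using Dm_pos[of m] by (simp add: abs_mult)
    have k1: "1 \<le> \<bar>real i - real j\<bar>" using assms(3) by (cases "i < j") auto
    have k2: "\<bar>real i - real j\<bar> \<le> real m" using assms(1,2) by auto
    have "Dm m \<le> \<bar>real i - real j\<bar> * Dm m" using k1 Dm_pos[of m] by simp
    moreover have "\<bar>real i - real j\<bar> * Dm m \<le> real m * Dm m" using k2 Dm_pos[of m] by (simp add: mult_right_mono)
    moreover note Dm_lt[of m] Dm_pos[of m] pi_gt_zero
    ultimately have h: "0 \<le> \<bar>real i - real j\<bar> * Dm m" "\<bar>real i - real j\<bar> * Dm m \<le> pi" "0 \<le> Dm m" "Dm m \<le> pi"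
      by linarith+
    show ?thesis unfolding d using cos_mono_le_eq[OF h] \<open>Dm m \<le> \<bar>real i - real j\<bar> * Dm m\<close> by simp
  qed
  finally show ?thesis .
qed

lemma T_fst: "fst (Tmap m e j v) = - e * fst v * sin (ang m j) - e^2 * snd v * cos (ang m j) + cos (ang m j)"
  by (simp add: Tmap_def Urot_def pj_def)
lemma T_snd: "snd (Tmap m e j v) = e * fst v * cos (ang m j) - e^2 * snd v * sin (ang m j) + sin (ang m j)"
  by (simp add: Tmap_def Urot_def pj_def)

lemma T_box: fixes e :: real assumes "0 < e" "e \<le> 1/8" "\<bar>fst v\<bar> \<le> 2" "\<bar>snd v\<bar> \<le> 2"
  shows "\<bar>fst (Tmap m e j v)\<bar> \<le> 2 \<and> \<bar>snd (Tmap m e j v)\<bar> \<le> 2"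
proof -
  have s: "\<bar>sin (ang m j)\<bar> \<le> 1" "\<bar>cos (ang m j)\<bar> \<le> 1" by (auto simp: abs_sin_le_one abs_cos_le_one)
  have e1: "\<bar>- e * fst v\<bar> \<le> 1/8 * 2" using absmul[of "-e" "1/8" "fst v" 2] assms by simp
  have "e * e \<le> 1/8 * 1" using mult_mono[of e "1/8" e 1] assms by simp
  then have e2': "\<bar>e^2\<bar> \<le> 1/8" by (simp add: power2_eq_square)
  have e2: "\<bar>e^2 * snd v\<bar> \<le> 1/8 * 2" using absmul[OF e2' assms(4)] .
  have a1: "\<bar>- e * fst v * sin (ang m j)\<bar> \<le> 1/4 * 1" using absmul[OF e1 s(1)] by simp
  have a2: "\<bar>e^2 * snd v * cos (ang m j)\<bar> \<le> 1/4 * 1" using absmul[OF e2 s(2)] by simp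
  have a3: "\<bar>e * fst v * cos (ang m j)\<bar> \<le> 1/4 * 1" using absmul[OF e1 s(2)] by simp
  have a4: "\<bar>e^2 * snd v * sin (ang m j)\<bar> \<le> 1/4 * 1" using absmul[OF e2 s(1)] by simp
  show ?thesis unfolding T_fst T_snd using a1 a2 a3 a4 s by linarith
qed

lemma div_ineq1: fixes ny nx C X Y :: real assumes "0 < ny"
  shows "C / ny < nx / ny * X + Y \<longleftrightarrow> C < nx * X + ny * Y"
proof -
  have "nx / ny * X + Y = (nx * X + ny * Y) / ny" using assms by (simp add: field_simps)
  then show ?thesis using assms by (simp add: divide_less_cancel)
qed
lemma div_ineq2: fixes ny nx C X Y :: real assumes "0 < ny"
  shows "nx / ny * X + Y < C / ny \<longleftrightarrow> nx * X + ny * Y < C"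
proof -
  have "nx / ny * X + Y = (nx * X + ny * Y) / ny" using assms by (simp add: field_simps)
  then show ?thesis using assms by (simp add: divide_less_cancel)
qed

lemma dd_facts: assumes "m \<ge> 1"
  shows "dd m \<le> 1/8" "dd m \<le> (sin (Dm m))^2 / 8" "dd m \<le> (1 - cos (Dm m)) / (3 * Mb m + 16)"
  "0 < dd m"
proof -
  show "dd m \<le> 1/8" "dd m \<le> (sin (Dm m))^2 / 8" "dd m \<le> (1 - cos (Dm m)) / (3 * Mb m + 16)"
    unfolding dd_def by (meson min.cobounded1 min.cobounded2 order_trans)+
  have "0 < Mb m" unfolding Mb_def using sin_Dm_pos[OF assms] by simp
  then show "0 < dd m" unfolding dd_def using sin_Dm_pos[OF assms] cos_Dm_lt[OF assms] by auto
qed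

lemma step_sep:
  assumes m: "m \<ge> 1" and e: "0 < e" "e < dd m" and i: "i \<in> {1..m}"
    and bx: "\<forall>j\<in>{1..m}. boxp (f j)"
    and sp: "sepp (Mb m) (fst (f i)) (snd (f i))"
  shows "sepp (Mb m) (fst (build m e (f,i))) (snd (build m e (f,i)))"
proof -
  define s0 where "s0 = sin (Dm m)"
  define M where "M = Mb m"
  define g where "g = 1 - cos (Dm m)"
  obtain a c where ac: "\<bar>a\<bar> \<le> M" "\<bar>c\<bar> \<le> M" "\<forall>x\<in>snd (f i). c < a * fst x + snd x"
    "\<forall>x\<in>fst (f i). a * fst x + snd x < c" using sp unfolding sepp_def M_def by blast
  have s0: "0 < s0" "s0 \<le> 1" unfolding s0_def using sin_Dm_pos[OF m] by auto
  have Md: "M = 4 / s0" unfolding M_def Mb_def s0_def by simp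
  have M0: "0 \<le> M" using Md s0 by simp
  have e8: "e \<le> 1/8" and es: "e \<le> s0^2/8" and eg: "e \<le> g / (3 * M + 16)"
    using dd_facts[OF m] e unfolding s0_def g_def M_def by linarith+
  have eM: "e * M \<le> s0 / 2"
  proof -
    have "e * M = 4 * e / s0" using Md by simp
    also have "\<dots> \<le> 4 * (s0^2/8) / s0" using es s0 by (intro divide_right_mono) auto
    also have "\<dots> = s0 / 2" using s0 by (simp add: power2_eq_square)
    finally show ?thesis .
  qed
  have ea: "\<bar>e * a\<bar> \<le> e * M" using ac e by (simp add: abs_mult mult_left_mono)
  have ea2: "\<bar>e * a\<bar> \<le> 1/2" using ea eM s0 by linarith
  define si where "si = sin (ang m i)"
  define ci where "ci = cos (ang m i)"
  have si: "s0 \<le> si" unfolding si_def s0_def using sin_ang_ge[OF i] .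
  have sc: "\<bar>si\<bar> \<le> 1" "\<bar>ci\<bar> \<le> 1" "si^2 + ci^2 = 1" unfolding si_def ci_def by (auto simp: abs_sin_le_one abs_cos_le_one)
  define nx where "nx = ci + e * a * si"
  define ny where "ny = si - e * a * ci"
  have "\<bar>e * a * ci\<bar> \<le> \<bar>e * a\<bar> * 1" using absmul[OF _ sc(2)] by simp
  then have ny: "s0 / 2 \<le> ny" unfolding ny_def using si ea eM by linarith
  have ny0: "0 < ny" using ny s0 by linarith
  have "\<bar>e * a * si\<bar> \<le> 1/2 * 1" using absmul[OF ea2 sc(1)] .
  then have nx: "\<bar>nx\<bar> \<le> 3/2" unfolding nx_def using sc by linarith
  have ec: "\<bar>e^2 * c\<bar> \<le> e * M"
  proof -
    have "\<bar>e^2 * c\<bar> = e * (e * \<bar>c\<bar>)" using e by (simp add: abs_mult power2_eq_square)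
    also have "\<dots> \<le> e * (1 * M)" using e e8 ac M0 by (intro mult_left_mono mult_mono) auto
    finally show ?thesis by simp
  qed
  define a' where "a' = nx / ny"
  define c' where "c' = (1 - e^2 * c) / ny"
  have bnd: "\<And>z. \<bar>z\<bar> \<le> 3/2 \<Longrightarrow> \<bar>z / ny\<bar> \<le> M"
  proof -
    fix z :: real assume z: "\<bar>z\<bar> \<le> 3/2"
    have "\<bar>z / ny\<bar> = \<bar>z\<bar> / ny" using ny0 by simp
    also have "\<dots> \<le> (3/2) / ny" using z ny0 by (intro divide_right_mono) auto
    also have "\<dots> \<le> (3/2) / (s0/2)" using ny s0 by (intro divide_left_mono) auto
    also have "\<dots> \<le> M" using Md s0 by (simp add: field_simps)
    finally show "\<bar>z / ny\<bar> \<le> M" .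
  qed
  have a'M: "\<bar>a'\<bar> \<le> M" unfolding a'_def using bnd nx by blast
  have c'M: "\<bar>c'\<bar> \<le> M" unfolding c'_def using bnd ec eM s0 by (intro bnd) linarith
  have self: "nx * fst (Tmap m e i u) + ny * snd (Tmap m e i u) = 1 - e^2 * (a * fst u + snd u)" for u
    unfolding T_fst T_snd nx_def ny_def si_def[symmetric] ci_def[symmetric] using T_self[OF sc(3)] by simp
  have e2p: "0 < e^2" using e by simp
  have Bside: "\<forall>x\<in>snd (build m e (f,i)). c' < a' * fst x + snd x"
  proof
    fix x assume "x \<in> snd (build m e (f,i))"
    then obtain u where u: "u \<in> fst (f i)" "x = Tmap m e i u" by (auto simp: build_def)
    have "1 - e^2 * c < 1 - e^2 * (a * fst u + snd u)" using ac(4) u(1) e2p by simp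
    then show "c' < a' * fst x + snd x" unfolding a'_def c'_def div_ineq1[OF ny0] u(2) self .
  qed
  have Aside: "\<forall>x\<in>fst (build m e (f,i)). a' * fst x + snd x < c'"
  proof
    fix x assume "x \<in> fst (build m e (f,i))"
    then obtain j u where ju: "j \<in> {1..m}" "u \<in> snd (f j)" "x = Tmap m e j u" by (auto simp: build_def)
    show "a' * fst x + snd x < c'" unfolding a'_def c'_def div_ineq2[OF ny0]
    proof (cases "j = i")
      case True
      have "1 - e^2 * (a * fst u + snd u) < 1 - e^2 * c" using ac(3) ju(2) e2p True by simp
      then show "nx * fst x + ny * snd x < 1 - e\<^sup>2 * c" using ju(3) True self by simp
    next
      case False
      have ub: "\<bar>fst u\<bar> \<le> 2" "\<bar>snd u\<bar> \<le> 2" using bx ju(1,2) unfolding boxp_def by auto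
      have "nx * fst x + ny * snd x \<le> (ci * cos (ang m j) + si * sin (ang m j)) + 2 * \<bar>e * a\<bar> + 12 * e"
        unfolding ju(3) T_fst T_snd nx_def ny_def
        by (rule T_other) (use ub sc e e8 ea2 in \<open>auto simp: abs_sin_le_one abs_cos_le_one\<close>)
      also have "ci * cos (ang m j) + si * sin (ang m j) \<le> 1 - g"
        unfolding ci_def si_def g_def using cos_ang_le[OF i ju(1)] False by simp
      finally have h1: "nx * fst x + ny * snd x \<le> 1 - g + 2 * (e * M) + 12 * e" using ea by linarith
      have "e * (3 * M + 16) \<le> g" using eg M0 by (simp add: field_simps)
      then have "3 * (e * M) + 16 * e \<le> g" by (simp add: algebra_simps)
      then show "nx * fst x + ny * snd x < 1 - e\<^sup>2 * c" using h1 ec e by linarith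
    qed
  qed
  show ?thesis unfolding sepp_def M_def[symmetric] using a'M c'M Bside Aside by blast
qed

definition Invp :: "nat \<Rightarrow> pr \<Rightarrow> bool" where
  "Invp m x \<longleftrightarrow> boxp x \<and> (fst x \<inter> snd x = {} \<longrightarrow> sepp (Mb m) (fst x) (snd x))"

lemma sep_conv: assumes "sepp M A B" shows "convex hull A \<inter> convex hull B = {}"
proof -
  obtain a c where ac: "\<forall>x\<in>B. c < a * fst x + snd x" "\<forall>x\<in>A. a * fst x + snd x < c"
    using assms unfolding sepp_def by blast
  have hA: "convex hull A \<subseteq> {x. inner (a, 1::real) x < c}"
    by (rule hull_minimal) (use ac in \<open>auto simp: convex_halfspace_lt\<close>)
  have hB: "convex hull B \<subseteq> {x. inner (a, 1::real) x > c}"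
    by (rule hull_minimal) (use ac in \<open>auto simp: convex_halfspace_gt\<close>)
  show ?thesis
  proof (rule equals0I)
    fix x assume "x \<in> convex hull A \<inter> convex hull B"
    then have "inner (a, 1::real) x < c" "c < inner (a, 1::real) x" using hA hB by blast+
    then show False by simp
  qed
qed

lemma disj_back: assumes "fst (build m e (f,i)) \<inter> snd (build m e (f,i)) = {}" "i \<in> {1..m}"
  shows "fst (f i) \<inter> snd (f i) = {}"
proof (rule ccontr)
  assume "fst (f i) \<inter> snd (f i) \<noteq> {}"
  then obtain u where "u \<in> fst (f i)" "u \<in> snd (f i)" by blast
  then have "Tmap m e i u \<in> fst (build m e (f,i))" "Tmap m e i u \<in> snd (build m e (f,i))"
    using assms(2) by (auto simp: build_def)
  then show False using assms(1) by blast
qed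

lemma build_box: assumes "0 < e" "e \<le> 1/8" "i \<in> {1..m}" "\<forall>j\<in>{1..m}. boxp (f j)"
  shows "boxp (build m e (f,i))"
  unfolding boxp_def
proof
  fix x assume "x \<in> fst (build m e (f, i)) \<union> snd (build m e (f, i))"
  then have "\<exists>j\<in>{1..m}. \<exists>u\<in>fst (f j) \<union> snd (f j). x = Tmap m e j u"
  proof
    assume "x \<in> fst (build m e (f, i))"
    then obtain j u where "j \<in> {1..m}" "u \<in> snd (f j)" "x = Tmap m e j u" unfolding build_def by auto
    then show ?thesis by blast
  next
    assume "x \<in> snd (build m e (f, i))"
    then obtain u where "u \<in> fst (f i)" "x = Tmap m e i u" unfolding build_def by auto
    then show ?thesis using assms(3) by blast
  qed
  then obtain j u where ju: "j \<in> {1..m}" "u \<in> fst (f j) \<union> snd (f j)" "x = Tmap m e j u"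
    by blast
  have "\<bar>fst u\<bar> \<le> 2" "\<bar>snd u\<bar> \<le> 2" using assms(4) ju(1,2) unfolding boxp_def by blast+
  then show "\<bar>fst x\<bar> \<le> 2 \<and> \<bar>snd x\<bar> \<le> 2" using T_box[OF assms(1,2)] ju(3) by blast
qed

lemma Mb_ge: "m \<ge> 1 \<Longrightarrow> 1 \<le> Mb m"
proof -
  assume m: "m \<ge> 1"
  have "sin (Dm m) \<le> 4" using sin_le_one[of "Dm m"] by linarith
  then show ?thesis unfolding Mb_def using sin_Dm_pos[OF m] by (simp add: field_simps)
qed

lemma build_inv: assumes m: "m \<ge> 1" and e: "0 < e" "e < dd m" and i: "i \<in> {1..m}"
  and f: "\<forall>j\<in>{1..m}. Invp m (f j)"
  shows "Invp m (build m e (f,i))"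
proof -
  have bx: "\<forall>j\<in>{1..m}. boxp (f j)" using f unfolding Invp_def by blast
  have "e \<le> 1/8" using dd_facts[OF m] e by linarith
  then have "boxp (build m e (f,i))" using build_box e i bx by blast
  moreover have "sepp (Mb m) (fst (build m e (f,i))) (snd (build m e (f,i)))"
    if "fst (build m e (f,i)) \<inter> snd (build m e (f,i)) = {}"
  proof -
    have "fst (f i) \<inter> snd (f i) = {}" using disj_back that i by blast
    then have "sepp (Mb m) (fst (f i)) (snd (f i))" using f i unfolding Invp_def by blast
    then show ?thesis using step_sep[OF m e i bx] by blast
  qed
  ultimately show ?thesis unfolding Invp_def by blast
qed

lemma set_joint: "(m::nat) \<ge> 1 \<Longrightarrow> w \<in> set_pmf (pair_pmf (Pi_pmf {1..m} undefined (\<lambda>_. p)) (pmf_of_set {1..m}))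
   \<Longrightarrow> (\<forall>j\<in>{1..m}. fst w j \<in> set_pmf p) \<and> snd w \<in> {1..m}"
proof -
  assume m: "m \<ge> 1" and w: "w \<in> set_pmf (pair_pmf (Pi_pmf {1..m} undefined (\<lambda>_. p)) (pmf_of_set {1..m}))"
  have s1: "set_pmf (Pi_pmf {1..m} undefined (\<lambda>_. p)) = PiE_dflt {1..m} undefined (set_pmf \<circ> (\<lambda>_. p))"
    by (rule set_Pi_pmf) simp
  have s2: "set_pmf (pmf_of_set {1..m}) = {1..m}" using m by (intro set_pmf_of_set) auto
  show ?thesis using w unfolding set_pair_pmf s1 s2 by (auto simp: PiE_dflt_def)
qed

lemma inv_all: "m \<ge> 1 \<Longrightarrow> (\<forall>k. 0 < eps k \<and> eps k < dd m) \<Longrightarrow> \<forall>x\<in>set_pmf (Ipmf m eps r). Invp m x"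
proof (induction m eps r rule: Ipmf.induct)
  case (1 m eps)
  have "Invp m x" if "x \<in> set_pmf base_pmf" for x
  proof -
    obtain b where x: "x = ({(0,0)}, if b then {(0,0)} else {})" using \<open>x \<in> set_pmf base_pmf\<close>
      unfolding base_pmf_def by auto
    have "sepp (Mb m) {(0,0)} {}" unfolding sepp_def using Mb_ge[OF "1.prems"(1)]
      by (intro exI[of _ 0] exI[of _ 1]) auto
    then show ?thesis unfolding x Invp_def boxp_def by auto
  qed
  then show ?case by simp
next
  case (2 m eps)
  have "Invp m x" if "x \<in> set_pmf base_pmf" for x
  proof -
    obtain b where x: "x = ({(0,0)}, if b then {(0,0)} else {})" using \<open>x \<in> set_pmf base_pmf\<close>
      unfolding base_pmf_def by auto
    have "sepp (Mb m) {(0,0)} {}" unfolding sepp_def using Mb_ge[OF "2.prems"(1)]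
      by (intro exI[of _ 0] exI[of _ 1]) auto
    then show ?thesis unfolding x Invp_def boxp_def by auto
  qed
  then show ?case by simp
next
  case (3 m eps k)
  show ?case
  proof
    fix x assume "x \<in> set_pmf (Ipmf m eps (Suc (Suc k)))"
    then obtain w where w: "w \<in> set_pmf (pair_pmf (Pi_pmf {1..m} undefined (\<lambda>_. Ipmf m eps (Suc k))) (pmf_of_set {1..m}))"
      "x = build m (eps (Suc (Suc k))) w" by auto
    have ws: "(\<forall>j\<in>{1..m}. fst w j \<in> set_pmf (Ipmf m eps (Suc k))) \<and> snd w \<in> {1..m}"
      using set_joint[OF "3.prems"(1) w(1)] .
    have "\<forall>j\<in>{1..m}. Invp m (fst w j)" using ws "3.IH" "3.prems" by blast
    then have "Invp m (build m (eps (Suc (Suc k))) (fst w, snd w))"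
      using build_inv[OF "3.prems"(1)] "3.prems"(2) ws by blast
    then show "Invp m x" using w(2) by simp
  qed
qed

theorem lemma9:
  fixes m :: nat
  assumes "m \<ge> 1"
  shows "\<exists>\<delta> :: nat \<Rightarrow> real. (\<forall>k. \<delta> k > 0) \<and>
    (\<forall>r (eps :: nat \<Rightarrow> real). r \<ge> 2 \<longrightarrow> (\<forall>k. 0 < eps k \<and> eps k < \<delta> k) \<longrightarrow>
      (AE w in measure_pmf (joint m eps r).
         let A = fst (build m (eps r) w); B = snd (build m (eps r) w);
             Ai = fst (fst w (snd w)); Bi = snd (fst w (snd w))
         in (convex hull A \<inter> convex hull B = {} \<longleftrightarrow> Ai \<inter> Bi = {}) \<and>
            (Ai \<inter> Bi = {} \<longleftrightarrow> A \<inter> B = {})))"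
proof (intro exI[of _ "\<lambda>k. dd m"] conjI allI impI)
  show "0 < dd m" for k :: nat using dd_facts[OF assms] by simp
next
  fix r :: nat and eps :: "nat \<Rightarrow> real"
  assume r: "r \<ge> 2" and eps: "\<forall>k. 0 < eps k \<and> eps k < dd m"
  show "AE w in measure_pmf (joint m eps r).
         let A = fst (build m (eps r) w); B = snd (build m (eps r) w);
             Ai = fst (fst w (snd w)); Bi = snd (fst w (snd w))
         in (convex hull A \<inter> convex hull B = {} \<longleftrightarrow> Ai \<inter> Bi = {}) \<and>
            (Ai \<inter> Bi = {} \<longleftrightarrow> A \<inter> B = {})"
    unfolding AE_measure_pmf_iff Let_def
  proof
    fix w assume "w \<in> set_pmf (joint m eps r)"
    then have ws: "(\<forall>j\<in>{1..m}. fst w j \<in> set_pmf (Ipmf m eps (r - 1))) \<and> snd w \<in> {1..m}"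
      unfolding joint_def using set_joint[OF assms] by blast
    obtain f i where w: "w = (f, i)" by (cases w)
    have i: "i \<in> {1..m}" and fI: "\<forall>j\<in>{1..m}. Invp m (f j)"
      using ws inv_all[OF assms eps] w by auto
    have e: "0 < eps r" "eps r < dd m" using eps by auto
    have bx: "\<forall>j\<in>{1..m}. boxp (f j)" using fI unfolding Invp_def by blast
    have c21: "convex hull fst (build m (eps r) (f,i)) \<inter> convex hull snd (build m (eps r) (f,i)) = {}"
      if "fst (f i) \<inter> snd (f i) = {}"
    proof -
      have "sepp (Mb m) (fst (f i)) (snd (f i))" using fI i that unfolding Invp_def by blast
      then show ?thesis using step_sep[OF assms e i bx] sep_conv by blast
    qed
    have c13: "fst (build m (eps r) (f,i)) \<inter> snd (build m (eps r) (f,i)) = {}"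
      if "convex hull fst (build m (eps r) (f,i)) \<inter> convex hull snd (build m (eps r) (f,i)) = {}"
      using that hull_subset[of "fst (build m (eps r) (f,i))" convex] hull_subset[of "snd (build m (eps r) (f,i))" convex]
      by blast
    have c32: "fst (f i) \<inter> snd (f i) = {}" if "fst (build m (eps r) (f,i)) \<inter> snd (build m (eps r) (f,i)) = {}"
      using disj_back[OF that i] .
    show "(convex hull fst (build m (eps r) w) \<inter> convex hull snd (build m (eps r) w) = {} \<longleftrightarrow>
           fst (fst w (snd w)) \<inter> snd (fst w (snd w)) = {}) \<and>
          (fst (fst w (snd w)) \<inter> snd (fst w (snd w)) = {} \<longleftrightarrow>
           fst (build m (eps r) w) \<inter> snd (build m (eps r) w) = {})"
      unfolding w using c21 c13 c32 by auto
  qed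
qed

end
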